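(* For every process $p$ of any LTS and every closed $\varphi\in\mathrm{sHML}$, the following are equivalent: (i) $p\in[\![\varphi]\!]_B$; (ii) every finfinite trace $g$ produced by $p$ satisfies $g\in[\![\varphi]\!]_F$.
   Context: Fix a finite set $\mathrm{Act}$ of actions, $\tau\notin\mathrm{Act}$. $\mathrm{sHML}$: $\varphi::=\mathrm{tt}\mid\mathrm{ff}\mid[A]\varphi\mid\varphi\wedge\varphi\mid\max X.\varphi\mid X$ ($A\subseteq\mathrm{Act}$, guarded). Branching-time semantics over an LTS $(\mathrm{Proc},\mathrm{Act}\cup\{\tau\},\to)$, with $p\overset{a}{\Longrightarrow}q$ iff $p(\xrightarrow{\tau})^*\xrightarrow{a}(\xrightarrow{\tau})^*q$: $[\![\mathrm{tt}]\!]_B=\mathrm{Proc}$, $[\![\mathrm{ff}]\!]_B=\emptyset$, $\wedge$ is intersection, $[\![[A]\varphi,\rho]\!]_B=\{p\mid\forall a\in A,\forall q.\ p\overset{a}{\Longrightarrow}q\Rightarrow q\in[\![\varphi,\rho]\!]_B\}$, $[\![\max X.\varphi,\rho]\!]_B=\bigcup\{S\mid S\subseteq[\![\varphi,\rho[X\mapsto S]]\!]_B\}$, $[\![X,\rho]\!]_B=\rho(X)$. Finfinite traces $\mathrm{Fin}=\mathrm{Act}^\omega\cup\mathrm{Act}^*$; finfinite semantics: $[\![\mathrm{tt}]\!]_F=\mathrm{Fin}$, $[\![\mathrm{ff}]\!]_F=\emptyset$, $\wedge$ intersection, $[\![[A]\varphi,\sigma]\!]_F=\{g\mid\forall a\in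 A,\forall g'.\ g=ag'\Rightarrow g'\in[\![\varphi,\sigma]\!]_F\}$ (so the empty trace satisfies every $[A]\varphi$), $[\![\max X.\varphi,\sigma]\!]_F=\bigcup\{S\subseteq\mathrm{Fin}\mid S\subseteq[\![\varphi,\sigma[X\mapsto S]]\!]_F\}$, $[\![X,\sigma]\!]_F=\sigma(X)$. A process $p$ produces a finite trace $s\in\mathrm{Act}^*$ if $p\overset{s}{\Longrightarrow}q$ for some $q$ (composition of weak steps), and produces an infinite trace $a_1a_2\cdots$ if there are $p=p_0,p_1,\ldots$ with $p_{i-1}\overset{a_i}{\Longrightarrow}p_i$ for all $i\ge1$. *)

theory Defs
  imports Main
begin

datatype ('a, 'v) shml =
    TT
  | FF
  | Box "'a set" "('a, 'v) shml"
  | Conj "('a, 'v) shml" "('a, 'v) shml"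
  | Max 'v "('a, 'v) shml"
  | Var 'v

fun fv :: "('a, 'v) shml \<Rightarrow> 'v set" where
  "fv TT = {}"
| "fv FF = {}"
| "fv (Box A \<phi>) = fv \<phi>"
| "fv (Conj \<phi> \<psi>) = fv \<phi> \<union> fv \<psi>"
| "fv (Max X \<phi>) = fv \<phi> - {X}"
| "fv (Var X) = {X}"

definition closed :: "('a, 'v) shml \<Rightarrow> bool" where
  "closed \<phi> \<longleftrightarrow> fv \<phi> = {}"

fun unguarded_occ :: "'v \<Rightarrow> ('a, 'v) shml \<Rightarrow> bool" where
  "unguarded_occ X TT = False"
| "unguarded_occ X FF = False"
| "unguarded_occ X (Box A \<phi>) = False"
| "unguarded_occ X (Conj \<phi> \<psi>) = (unguarded_occ X \<phi> \<or> unguarded_occ X \<psi>)"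
| "unguarded_occ X (Max Y \<phi>) = (Y \<noteq> X \<and> unguarded_occ X \<phi>)"
| "unguarded_occ X (Var Y) = (X = Y)"

fun guarded :: "('a, 'v) shml \<Rightarrow> bool" where
  "guarded TT = True"
| "guarded FF = True"
| "guarded (Box A \<phi>) = guarded \<phi>"
| "guarded (Conj \<phi> \<psi>) = (guarded \<phi> \<and> guarded \<psi>)"
| "guarded (Max X \<phi>) = (\<not> unguarded_occ X \<phi> \<and> guarded \<phi>)"
| "guarded (Var X) = True"

section \<open>LTS with silent action (None = tau)\<close>

definition tau_steps :: "('p \<Rightarrow> 'a option \<Rightarrow> 'p \<Rightarrow> bool) \<Rightarrow> 'p \<Rightarrow> 'p \<Rightarrow> bool" where
  "tau_steps step = (\<lambda>p q. step p None q)\<^sup>*\<^sup>*"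

definition wstep :: "('p \<Rightarrow> 'a option \<Rightarrow> 'p \<Rightarrow> bool) \<Rightarrow> 'p \<Rightarrow> 'a \<Rightarrow> 'p \<Rightarrow> bool" where
  "wstep step p a q \<longleftrightarrow>
     (\<exists>p' q'. tau_steps step p p' \<and> step p' (Some a) q' \<and> tau_steps step q' q)"

fun wtrace :: "('p \<Rightarrow> 'a option \<Rightarrow> 'p \<Rightarrow> bool) \<Rightarrow> 'p \<Rightarrow> 'a list \<Rightarrow> 'p \<Rightarrow> bool" where
  "wtrace step p [] q = tau_steps step p q"
| "wtrace step p (a # s) q = (\<exists>p'. wstep step p a p' \<and> wtrace step p' s q)"

fun semB :: "('p \<Rightarrow> 'a option \<Rightarrow> 'p \<Rightarrow> bool) \<Rightarrow> ('a, 'v) shml \<Rightarrow> ('v \<Rightarrow> 'p set) \<Rightarrow> 'p set" where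
  "semB step TT \<rho> = UNIV"
| "semB step FF \<rho> = {}"
| "semB step (Conj \<phi> \<psi>) \<rho> = semB step \<phi> \<rho> \<inter> semB step \<psi> \<rho>"
| "semB step (Box A \<phi>) \<rho> =
     {p. \<forall>a\<in>A. \<forall>q. wstep step p a q \<longrightarrow> q \<in> semB step \<phi> \<rho>}"
| "semB step (Max X \<phi>) \<rho> = \<Union>{S. S \<subseteq> semB step \<phi> (\<rho>(X := S))}"
| "semB step (Var X) \<rho> = \<rho> X"

datatype 'a fintrace = FinT "'a list" | InfT "nat \<Rightarrow> 'a"

fun tcons :: "'a \<Rightarrow> 'a fintrace \<Rightarrow> 'a fintrace" where
  "tcons a (FinT s) = FinT (a # s)"
| "tcons a (InfT f) = InfT (\<lambda>n. if n = 0 then a else f (n - 1))"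

fun semF :: "('a, 'v) shml \<Rightarrow> ('v \<Rightarrow> 'a fintrace set) \<Rightarrow> 'a fintrace set" where
  "semF TT \<sigma> = UNIV"
| "semF FF \<sigma> = {}"
| "semF (Conj \<phi> \<psi>) \<sigma> = semF \<phi> \<sigma> \<inter> semF \<psi> \<sigma>"
| "semF (Box A \<phi>) \<sigma> =
     {g. \<forall>a\<in>A. \<forall>g'. g = tcons a g' \<longrightarrow> g' \<in> semF \<phi> \<sigma>}"
| "semF (Max X \<phi>) \<sigma> = \<Union>{S. S \<subseteq> semF \<phi> (\<sigma>(X := S))}"
| "semF (Var X) \<sigma> = \<sigma> X"

definition produces :: "('p \<Rightarrow> 'a option \<Rightarrow> 'p \<Rightarrow> bool) \<Rightarrow> 'p \<Rightarrow> 'a fintrace \<Rightarrow> bool" where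
  "produces step p g \<longleftrightarrow>
     (case g of
        FinT s \<Rightarrow> (\<exists>q. wtrace step p s q)
      | InfT f \<Rightarrow> (\<exists>ps. ps 0 = p \<and> (\<forall>i. wstep step (ps i) (f i) (ps (Suc i)))))"

end

theory Submission
  imports Defs
begin

definition Proc :: "('p \<Rightarrow> 'a option \<Rightarrow> 'p \<Rightarrow> bool) \<Rightarrow> 'a fintrace set \<Rightarrow> 'p set" where
  "Proc step T = {p. \<forall>g. produces step p g \<longrightarrow> g \<in> T}"

lemma Proc_mono: "T \<subseteq> U \<Longrightarrow> Proc step T \<subseteq> Proc step U"
  unfolding Proc_def by blast

lemma Proc_empty: "Proc step {} = {}"
proof -
  have "wtrace step p [] p" for p by (simp add: tau_steps_def)
  then have "produces step p (FinT [])" for p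
    unfolding produces_def fintrace.case by blast
  then show ?thesis unfolding Proc_def by blast
qed

lemma produces_tcons:
  "produces step p (tcons a g) \<longleftrightarrow> (\<exists>q. wstep step p a q \<and> produces step q g)"
proof (cases g)
  case (FinT s)
  have "(\<exists>q. wtrace step p (a#s) q) \<longleftrightarrow> (\<exists>q. wstep step p a q \<and> (\<exists>r. wtrace step q s r))" by auto
  then show ?thesis by (simp only: FinT produces_def tcons.simps fintrace.case)
next
  case (InfT f)
  show ?thesis
  proof
    assume "produces step p (tcons a g)"
    then obtain ps where ps: "ps 0 = p"
      "\<forall>i. wstep step (ps i) (if i = 0 then a else f (i - 1)) (ps (Suc i))"
      using InfT by (auto simp: produces_def)
    have "wstep step p a (ps 1)" using ps spec[OF ps(2), of 0] by simp
    moreover have "produces step (ps 1) g"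
      unfolding InfT produces_def fintrace.case
    proof (rule exI[of _ "\<lambda>i. ps (Suc i)"], intro conjI allI)
      fix i show "wstep step (ps (Suc i)) (f i) (ps (Suc (Suc i)))"
        using spec[OF ps(2), of "Suc i"] by simp
    qed simp
    ultimately show "\<exists>q. wstep step p a q \<and> produces step q g" by blast
  next
    assume "\<exists>q. wstep step p a q \<and> produces step q g"
    then obtain q ps where q: "wstep step p a q" "ps 0 = q" "\<forall>i. wstep step (ps i) (f i) (ps (Suc i))"
      using InfT by (auto simp: produces_def)
    show "produces step p (tcons a g)"
      unfolding InfT produces_def tcons.simps fintrace.case
      apply (rule exI[of _ "\<lambda>i. if i = 0 then p else ps (i - 1)"])
      apply (intro conjI allI)
       apply simp
      subgoal for i using q by (cases i) simp_all
      done
  qed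
qed

lemma semF_mono: "(\<And>X. \<sigma> X \<subseteq> \<sigma>' X) \<Longrightarrow> semF \<phi> \<sigma> \<subseteq> semF \<phi> \<sigma>'"
proof (induction \<phi> arbitrary: \<sigma> \<sigma>')
  case (Box A \<phi>)
  have "semF \<phi> \<sigma> \<subseteq> semF \<phi> \<sigma>'" by (rule Box.IH) (rule Box.prems)
  then show ?case by (simp only: semF.simps) blast
next
  case (Conj \<phi>1 \<phi>2)
  have 1: "semF \<phi>1 \<sigma> \<subseteq> semF \<phi>1 \<sigma>'" by (rule Conj.IH(1)) (rule Conj.prems)
  have 2: "semF \<phi>2 \<sigma> \<subseteq> semF \<phi>2 \<sigma>'" by (rule Conj.IH(2)) (rule Conj.prems)
  show ?case using 1 2 by (simp only: semF.simps) blast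
next
  case (Max X \<phi>)
  show ?case
  proof
    fix g assume "g \<in> semF (Max X \<phi>) \<sigma>"
    then obtain S where S: "g \<in> S" "S \<subseteq> semF \<phi> (\<sigma>(X := S))" by (simp only: semF.simps) blast
    have le: "(\<sigma>(X := S)) Y \<subseteq> (\<sigma>'(X := S)) Y" for Y
      using Max.prems[of Y] by (cases "Y = X") simp_all
    have "semF \<phi> (\<sigma>(X := S)) \<subseteq> semF \<phi> (\<sigma>'(X := S))"
      by (rule Max.IH) (rule le)
    with S show "g \<in> semF (Max X \<phi>) \<sigma>'" by (simp only: semF.simps) blast
  qed
next
  case (Var X)
  show ?case using Var.prems[of X] by simp
next
  case TT
  show ?case by simp
next
  case FF
  show ?case by simp
qed

lemma semB_mono: "(\<And>X. \<rho> X \<subseteq> \<rho>' X) \<Longrightarrow> semB step \<phi> \<rho> \<subseteq> semB step \<phi> \<rho>'"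
proof (induction \<phi> arbitrary: \<rho> \<rho>')
  case (Box A \<phi>)
  have "semB step \<phi> \<rho> \<subseteq> semB step \<phi> \<rho>'" by (rule Box.IH) (rule Box.prems)
  then show ?case by (simp only: semB.simps) blast
next
  case (Conj \<phi>1 \<phi>2)
  have 1: "semB step \<phi>1 \<rho> \<subseteq> semB step \<phi>1 \<rho>'" by (rule Conj.IH(1)) (rule Conj.prems)
  have 2: "semB step \<phi>2 \<rho> \<subseteq> semB step \<phi>2 \<rho>'" by (rule Conj.IH(2)) (rule Conj.prems)
  show ?case using 1 2 by (simp only: semB.simps) blast
next
  case (Max X \<phi>)
  show ?case
  proof
    fix g assume "g \<in> semB step (Max X \<phi>) \<rho>"
    then obtain S where S: "g \<in> S" "S \<subseteq> semB step \<phi> (\<rho>(X := S))" by (simp only: semB.simps) blast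
    have le: "(\<rho>(X := S)) Y \<subseteq> (\<rho>'(X := S)) Y" for Y
      using Max.prems[of Y] by (cases "Y = X") simp_all
    have "semB step \<phi> (\<rho>(X := S)) \<subseteq> semB step \<phi> (\<rho>'(X := S))"
      by (rule Max.IH) (rule le)
    with S show "g \<in> semB step (Max X \<phi>) \<rho>'" by (simp only: semB.simps) blast
  qed
next
  case (Var X)
  show ?case using Var.prems[of X] by simp
next
  case TT
  show ?case by simp
next
  case FF
  show ?case by simp
qed

lemma key:
  "semB step \<phi> (\<lambda>X. Proc step (\<sigma> X)) = Proc step (semF \<phi> \<sigma>)"
proof (induction \<phi> arbitrary: \<sigma>)
  case TT
  then show ?case by (simp add: Proc_def)
next
  case FF
  then show ?case by (simp add: Proc_empty)
next
  case (Box A \<phi>)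
  show ?case
  proof
    show "semB step (Box A \<phi>) (\<lambda>X. Proc step (\<sigma> X)) \<subseteq> Proc step (semF (Box A \<phi>) \<sigma>)"
    proof
      fix p
      assume H0: "p \<in> semB step (Box A \<phi>) (\<lambda>X. Proc step (\<sigma> X))"
      show "p \<in> Proc step (semF (Box A \<phi>) \<sigma>)"
      unfolding Proc_def semF.simps
      proof (intro CollectI allI impI ballI)
      fix g a g'
      assume pr0: "produces step p g" and a: "a \<in> A" and ge: "g = tcons a g'"
      have H: "\<forall>a\<in>A. \<forall>q. wstep step p a q \<longrightarrow> q \<in> semB step \<phi> (\<lambda>X. Proc step (\<sigma> X))"
        using H0 by simp
      have pr: "produces step p (tcons a g')" using pr0 ge by simp
      from pr obtain q where "wstep step p a q" "produces step q g'" using produces_tcons by metis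
      with H a have "q \<in> semB step \<phi> (\<lambda>X. Proc step (\<sigma> X))" by blast
      then have "q \<in> Proc step (semF \<phi> \<sigma>)" by (simp only: Box.IH)
      then show "g' \<in> semF \<phi> \<sigma>" using \<open>produces step q g'\<close> unfolding Proc_def by blast
    qed
    qed
  next
    show "Proc step (semF (Box A \<phi>) \<sigma>) \<subseteq> semB step (Box A \<phi>) (\<lambda>X. Proc step (\<sigma> X))"
    proof (clarsimp simp: Box.IH)
      fix p a q
      assume H: "p \<in> Proc step {g. \<forall>a\<in>A. \<forall>g'. g = tcons a g' \<longrightarrow> g' \<in> semF \<phi> \<sigma>}"
        and a: "a \<in> A" and w: "wstep step p a q"
      show "q \<in> Proc step (semF \<phi> \<sigma>)"
        unfolding Proc_def
      proof clarify
        fix g assume "produces step q g"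
        with w have "produces step p (tcons a g)" using produces_tcons by metis
        with H a show "g \<in> semF \<phi> \<sigma>" unfolding Proc_def by blast
      qed
    qed
  qed
next
  case (Conj \<phi>1 \<phi>2)
  then show ?case by (auto simp: Proc_def)
next
  case (Var X)
  then show ?case by simp
next
  case (Max X \<phi>)
  define F where "F T = semF \<phi> (\<sigma>(X := T))" for T
  define G where "G S = semB step \<phi> ((\<lambda>Y. Proc step (\<sigma> Y))(X := S))" for S
  have GF: "G (Proc step T) = Proc step (F T)" for T
  proof -
    have e: "(\<lambda>Y. Proc step (\<sigma> Y))(X := Proc step T) = (\<lambda>Y. Proc step ((\<sigma>(X := T)) Y))"
      by (rule ext) simp
    show ?thesis unfolding G_def F_def e by (rule Max.IH)
  qed
  have Fmono: "T \<subseteq> U \<Longrightarrow> F T \<subseteq> F U" for T U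
    unfolding F_def by (rule semF_mono) auto
  have Gmono: "S \<subseteq> S' \<Longrightarrow> G S \<subseteq> G S'" for S S'
    unfolding G_def by (rule semB_mono) auto
  have MF: "semF (Max X \<phi>) \<sigma> = \<Union>{T. T \<subseteq> F T}" by (simp add: F_def)
  have MG: "semB step (Max X \<phi>) (\<lambda>X. Proc step (\<sigma> X)) = \<Union>{S. S \<subseteq> G S}" by (simp add: G_def)
  show ?case unfolding MF MG
  proof
    show "\<Union>{S. S \<subseteq> G S} \<subseteq> Proc step (\<Union>{T. T \<subseteq> F T})"
    proof
      fix p assume "p \<in> \<Union>{S. S \<subseteq> G S}"
      then obtain S where S: "p \<in> S" "S \<subseteq> G S" by blast
      define T where "T = {g. \<exists>q\<in>S. produces step q g}"
      have ST: "S \<subseteq> Proc step T" unfolding T_def Proc_def by blast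
      have "T \<subseteq> F T"
      proof
        fix g assume "g \<in> T"
        then obtain q where "q \<in> S" "produces step q g" unfolding T_def by blast
        moreover have "S \<subseteq> Proc step (F T)" using S(2) Gmono[OF ST] GF[of T] by blast
        ultimately show "g \<in> F T" unfolding Proc_def by blast
      qed
      then have "T \<subseteq> \<Union>{T. T \<subseteq> F T}" by blast
      then have "Proc step T \<subseteq> Proc step (\<Union>{T. T \<subseteq> F T})" by (rule Proc_mono)
      then show "p \<in> Proc step (\<Union>{T. T \<subseteq> F T})"
        using ST S(1) by blast
    qed
  next
    show "Proc step (\<Union>{T. T \<subseteq> F T}) \<subseteq> \<Union>{S. S \<subseteq> G S}"
    proof
      fix p assume p: "p \<in> Proc step (\<Union>{T. T \<subseteq> F T})"
      define U where "U = \<Union>{T. T \<subseteq> F T}"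
      have "U \<subseteq> F U"
      proof
        fix g assume "g \<in> U"
        then obtain T where "g \<in> T" "T \<subseteq> F T" unfolding U_def by blast
        moreover have "T \<subseteq> U" using \<open>T \<subseteq> F T\<close> unfolding U_def by blast
        ultimately show "g \<in> F U" using Fmono[of T U] by blast
      qed
      then have "Proc step U \<subseteq> Proc step (F U)" by (rule Proc_mono)
      then have "Proc step U \<subseteq> G (Proc step U)" by (simp only: GF)
      then show "p \<in> \<Union>{S. S \<subseteq> G S}"
        using p unfolding U_def by blast
    qed
  qed
qed

theorem mainTheorem17:
  fixes step :: "'p \<Rightarrow> ('a::finite) option \<Rightarrow> 'p \<Rightarrow> bool"
    and \<phi> :: "('a, 'v) shml"
    and p :: 'p
  assumes "closed \<phi>" and "guarded \<phi>"
  shows "p \<in> semB step \<phi> (\<lambda>_. {}) \<longleftrightarrow>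
         (\<forall>g. produces step p g \<longrightarrow> g \<in> semF \<phi> (\<lambda>_. {}))"
proof -
  have "semB step \<phi> (\<lambda>_. {}) = Proc step (semF \<phi> (\<lambda>_. {}))"
    using key[of step \<phi> "\<lambda>_. {}"] by (simp add: Proc_empty)
  then show ?thesis unfolding Proc_def by auto
qed

end
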